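(* Let $X,Y$ be measurable spaces, $P$ a probability on $X$, $\pi$ a probability on $X\times Y$ with $x$-marginal $P$, and $\nu$ a probability on $X$. Assume $S^{\nu}(P)$ and $H^{\nu}(\pi)$ are finite. Then \[IG(\pi,P)=S^{\nu}(P)-H^{\nu}(\pi).\]
   Context: $\mathcal{F}(\mu)$ is the set of measurable functions whose $\mu$-integral is well defined (not $+\infty-\infty$). For a probability $\rho$ on $X$: $S^{\rho}(P)=-\sup\{\int c\,dP:\ c\in\mathcal{F}(P),\ \int e^{c}\,d\rho=1\}$ and $H^{\rho}(\pi)=-\sup\{\int c\,d\pi:\ c\in\mathcal{F}(\pi),\ \int e^{c(x,y)}\,d\rho(x)=1\ \forall y\in Y\}$. The information gain of $\pi$ relative to $P$ is $IG(\pi,P):=-H^{P}(\pi)$ (the kernel $\hat\nu^y=P$ for all $y$). *)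

theory Defs
  imports "HOL-Probability.Probability"
begin

definition ext_integral :: "'a measure \<Rightarrow> ('a \<Rightarrow> real) \<Rightarrow> ereal" where
  "ext_integral M c =
     enn2ereal (\<integral>\<^sup>+ x. ennreal (c x) \<partial>M) - enn2ereal (\<integral>\<^sup>+ x. ennreal (- c x) \<partial>M)"

definition well_def_int :: "'a measure \<Rightarrow> ('a \<Rightarrow> real) \<Rightarrow> bool" where
  "well_def_int M c \<longleftrightarrow> c \<in> borel_measurable M \<and>
     \<not> ((\<integral>\<^sup>+ x. ennreal (c x) \<partial>M) = \<infinity> \<and> (\<integral>\<^sup>+ x. ennreal (- c x) \<partial>M) = \<infinity>)"

definition S_ent :: "'a measure \<Rightarrow> 'a measure \<Rightarrow> ereal" where
  "S_ent \<rho> P = - (SUP c \<in> {c. well_def_int P c \<and> (\<integral>\<^sup>+ x. ennreal (exp (c x)) \<partial>\<rho>) = 1}.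
                       ext_integral P c)"

definition H_ent :: "'a measure \<Rightarrow> 'b measure \<Rightarrow> ('a \<times> 'b) measure \<Rightarrow> ereal" where
  "H_ent \<rho> MY \<pi> = - (SUP c \<in> {c. well_def_int \<pi> c \<and>
        (\<forall>y\<in>space MY. (\<integral>\<^sup>+ x. ennreal (exp (c (x, y))) \<partial>\<rho>) = 1)}. ext_integral \<pi> c)"

definition info_gain :: "('a \<times> 'b) measure \<Rightarrow> 'b measure \<Rightarrow> 'a measure \<Rightarrow> ereal" where
  "info_gain \<pi> MY P = - H_ent P MY \<pi>"

end

theory Submission
  imports Defs
begin


lemma ext_integrable:
  assumes "integrable M c" shows "ext_integral M c = ereal (integral\<^sup>L M c)"
proof -
  obtain r q where "0 \<le> r" "0 \<le> q" "(\<integral>\<^sup>+x. ennreal (c x)\<partial>M) = ennreal r"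
    "(\<integral>\<^sup>+x. ennreal (-c x)\<partial>M) = ennreal q" "integral\<^sup>L M c = r - q"
    using integrableE[OF assms] by metis
  then show ?thesis by (simp add: ext_integral_def)
qed

lemma ext_mono_AE:
  assumes "AE x in M. c x \<le> h x"
  shows "ext_integral M c \<le> ext_integral M h"
proof -
  have 1: "(\<integral>\<^sup>+x. ennreal (c x)\<partial>M) \<le> (\<integral>\<^sup>+x. ennreal (h x)\<partial>M)"
    using assms by (auto intro!: nn_integral_mono_AE elim!: eventually_mono intro: ennreal_leI)
  have 2: "(\<integral>\<^sup>+x. ennreal (- h x)\<partial>M) \<le> (\<integral>\<^sup>+x. ennreal (- c x)\<partial>M)"
    using assms by (auto intro!: nn_integral_mono_AE elim!: eventually_mono intro: ennreal_leI)
  show ?thesis unfolding ext_integral_def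
    by (intro ereal_minus_mono) (use 1 2 in \<open>auto simp: less_eq_ennreal.rep_eq\<close>)
qed

lemma ext_cong_AE:
  assumes "AE x in M. c x = h x"
  shows "ext_integral M c = ext_integral M h"
  using assms by (intro antisym ext_mono_AE) auto

lemma wd_cong_AE:
  assumes "AE x in M. c x = h x" "h \<in> borel_measurable M" "well_def_int M c"
  shows "well_def_int M h"
proof -
  have "(\<integral>\<^sup>+x. ennreal (c x)\<partial>M) = (\<integral>\<^sup>+x. ennreal (h x)\<partial>M)"
       "(\<integral>\<^sup>+x. ennreal (- c x)\<partial>M) = (\<integral>\<^sup>+x. ennreal (- h x)\<partial>M)"
    using assms(1) by (auto intro!: nn_integral_cong_AE)
  then show ?thesis using assms unfolding well_def_int_def by auto
qed

lemma pos_part_bound: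
  fixes c g :: "'a \<Rightarrow> real"
  assumes [measurable]: "c \<in> borel_measurable M" "g \<in> borel_measurable M"
  shows "(\<integral>\<^sup>+x. ennreal (c x)\<partial>M) \<le> (\<integral>\<^sup>+x. ennreal (c x + g x)\<partial>M) + (\<integral>\<^sup>+x. ennreal (- g x)\<partial>M)"
proof -
  have "(\<integral>\<^sup>+x. ennreal (c x)\<partial>M) \<le> (\<integral>\<^sup>+x. ennreal (c x + g x) + ennreal (- g x)\<partial>M)"
  proof (intro nn_integral_mono)
    fix x
    have "ennreal (c x) \<le> ennreal (max 0 (c x + g x) + max 0 (- g x))"
      by (intro ennreal_leI) auto
    also have "\<dots> = ennreal (c x + g x) + ennreal (- g x)"
      by (simp add: ennreal_plus[symmetric] max_def ennreal_neg del: ennreal_plus)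
    finally show "ennreal (c x) \<le> ennreal (c x + g x) + ennreal (- g x)" .
  qed
  also have "\<dots> = (\<integral>\<^sup>+x. ennreal (c x + g x)\<partial>M) + (\<integral>\<^sup>+x. ennreal (- g x)\<partial>M)"
    by (intro nn_integral_add) auto
  finally show ?thesis .
qed

lemma ext_add_integrable:
  assumes wd: "well_def_int M c" and g: "integrable M g"
  shows "well_def_int M (\<lambda>x. c x + g x) \<and>
         ext_integral M (\<lambda>x. c x + g x) = ext_integral M c + ereal (integral\<^sup>L M g)"
proof -
  have [measurable]: "c \<in> borel_measurable M" "g \<in> borel_measurable M"
    using wd g unfolding well_def_int_def by auto
  define A where "A = (\<integral>\<^sup>+x. ennreal (c x)\<partial>M)"
  define B where "B = (\<integral>\<^sup>+x. ennreal (- c x)\<partial>M)"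
  define A' where "A' = (\<integral>\<^sup>+x. ennreal (c x + g x)\<partial>M)"
  define B' where "B' = (\<integral>\<^sup>+x. ennreal (- (c x + g x))\<partial>M)"
  have Gp: "(\<integral>\<^sup>+x. ennreal (g x)\<partial>M) \<noteq> \<infinity>" and Gm: "(\<integral>\<^sup>+x. ennreal (- g x)\<partial>M) \<noteq> \<infinity>"
    using g by auto
  have 1: "A \<le> A' + (\<integral>\<^sup>+x. ennreal (- g x)\<partial>M)"
    unfolding A_def A'_def by (rule pos_part_bound) auto
  have 2: "A' \<le> A + (\<integral>\<^sup>+x. ennreal (g x)\<partial>M)"
    using pos_part_bound[of "\<lambda>x. c x + g x" M "\<lambda>x. - g x"] unfolding A_def A'_def by simp
  have 3: "B \<le> B' + (\<integral>\<^sup>+x. ennreal (g x)\<partial>M)"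
    using pos_part_bound[of "\<lambda>x. - c x" M "\<lambda>x. - g x"] unfolding B_def B'_def by simp
  have 4: "B' \<le> B + (\<integral>\<^sup>+x. ennreal (- g x)\<partial>M)"
    using pos_part_bound[of "\<lambda>x. - (c x + g x)" M "\<lambda>x. g x"] unfolding B_def B'_def by simp
  have AA: "A = \<infinity> \<longleftrightarrow> A' = \<infinity>"
    using 1 2 Gp Gm by (auto simp: top_unique ennreal_add_eq_top)
  have BB: "B = \<infinity> \<longleftrightarrow> B' = \<infinity>"
    using 3 4 Gp Gm by (auto simp: top_unique ennreal_add_eq_top)
  have wd2: "well_def_int M (\<lambda>x. c x + g x)"
    using wd AA BB unfolding well_def_int_def A_def B_def A'_def B'_def by auto
  have "ext_integral M (\<lambda>x. c x + g x) = ext_integral M c + ereal (integral\<^sup>L M g)"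
  proof (cases "A = \<infinity>")
    case True
    then have "B \<noteq> \<infinity>" "B' \<noteq> \<infinity>" "A' = \<infinity>" using wd AA BB unfolding well_def_int_def A_def B_def by auto
    then show ?thesis using True unfolding ext_integral_def A_def[symmetric] B_def[symmetric]
        A'_def[symmetric] B'_def[symmetric]
      by (auto simp: enn2ereal_eq_top_iff less_top[symmetric])
  next
    case False
    note nA = False
    show ?thesis
    proof (cases "B = \<infinity>")
      case True
      then have "A' \<noteq> \<infinity>" "B' = \<infinity>" using nA AA BB by auto
      then show ?thesis using True nA unfolding ext_integral_def A_def[symmetric] B_def[symmetric]
          A'_def[symmetric] B'_def[symmetric]
        by (cases "enn2ereal A"; cases "enn2ereal A'") (auto simp: enn2ereal_eq_top_iff)
    next
      case False
      then have ic: "integrable M c" using nA unfolding real_integrable_def A_def B_def by auto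
      then have "integrable M (\<lambda>x. c x + g x)" using g by auto
      then show ?thesis using ic g by (simp add: ext_integrable integral_add)
    qed
  qed
  with wd2 show ?thesis by simp
qed



definition "AS \<rho> P = {c. well_def_int P c \<and> (\<integral>\<^sup>+ x. ennreal (exp (c x)) \<partial>\<rho>) = 1}"
definition "bS \<rho> P = (SUP c \<in> AS \<rho> P. ext_integral P c)"
definition "AH \<rho> MY \<pi> = {c. well_def_int \<pi> c \<and>
        (\<forall>y\<in>space MY. (\<integral>\<^sup>+ x. ennreal (exp (c (x, y))) \<partial>\<rho>) = 1)}"
definition "aH \<rho> MY \<pi> = (SUP c \<in> AH \<rho> MY \<pi>. ext_integral \<pi> c)"

lemma S_ent_bS: "S_ent \<rho> P = - bS \<rho> P"
  unfolding S_ent_def bS_def AS_def by simp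
lemma H_ent_aH: "H_ent \<rho> MY \<pi> = - aH \<rho> MY \<pi>"
  unfolding H_ent_def aH_def AH_def by simp

lemma ext_add_const:
  assumes "prob_space M" "well_def_int M c"
  shows "well_def_int M (\<lambda>x. c x + a) \<and> ext_integral M (\<lambda>x. c x + a) = ext_integral M c + ereal a"
proof -
  interpret prob_space M by fact
  show ?thesis using ext_add_integrable[OF assms(2), of "\<lambda>x. a"] by (simp add: prob_space)
qed

lemma bS_ge0:
  assumes "prob_space \<rho>" "prob_space P"
  shows "0 \<le> bS \<rho> P"
proof -
  have "(\<lambda>x. 0) \<in> AS \<rho> P" using assms
    by (simp add: AS_def well_def_int_def prob_space.emeasure_space_1)
  then have "ext_integral P (\<lambda>x. 0) \<le> bS \<rho> P" unfolding bS_def by (rule SUP_upper)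
  then show ?thesis by (simp add: ext_integral_def)
qed

lemma S_norm:
  assumes "prob_space P" "well_def_int P d" "sets \<rho> = sets P"
    and K: "0 < (\<integral>\<^sup>+ x. ennreal (exp (d x)) \<partial>\<rho>)" "(\<integral>\<^sup>+ x. ennreal (exp (d x)) \<partial>\<rho>) \<le> ennreal B"
  shows "ext_integral P d \<le> bS \<rho> P + ereal (ln B)"
proof -
  define K where "K = (\<integral>\<^sup>+ x. ennreal (exp (d x)) \<partial>\<rho>)"
  define k where "k = enn2real K"
  have Kfin: "K \<noteq> \<infinity>" using K unfolding K_def by (auto simp: top_unique)
  have kpos: "0 < k" using K Kfin unfolding k_def K_def by (simp add: enn2real_positive_iff less_top)
  have Kk: "K = ennreal k" using Kfin unfolding k_def by (simp add: less_top)
  have kB: "k \<le> B" using K Kk unfolding K_def using kpos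
    by (metis ennreal_le_iff le_less_trans less_eq_real_def not_le)
  define d' where "d' = (\<lambda>x. d x + (- ln k))"
  have 1: "well_def_int P d'" "ext_integral P d' = ext_integral P d + ereal (- ln k)"
    using ext_add_const[OF assms(1,2), of "- ln k"] unfolding d'_def by auto
  have "(\<integral>\<^sup>+ x. ennreal (exp (d' x)) \<partial>\<rho>) = (\<integral>\<^sup>+ x. ennreal (exp (d x)) * ennreal (1/k) \<partial>\<rho>)"
    unfolding d'_def using kpos
    by (intro nn_integral_cong) (simp add: exp_diff ennreal_mult[symmetric] field_simps)
  also have "\<dots> = K * ennreal (1/k)"
    unfolding K_def using assms(2,3) unfolding well_def_int_def
    by (intro nn_integral_multc) (auto simp: measurable_cong_sets[OF assms(3) refl])
  also have "\<dots> = 1" using kpos by (simp add: Kk ennreal_mult[symmetric])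
  finally have "d' \<in> AS \<rho> P" using 1 unfolding AS_def by auto
  then have "ext_integral P d' \<le> bS \<rho> P" unfolding bS_def by (rule SUP_upper)
  then have "ext_integral P d \<le> bS \<rho> P + ereal (ln k)" using 1
    by (cases "ext_integral P d"; cases "bS \<rho> P") auto
  also have "\<dots> \<le> bS \<rho> P + ereal (ln B)" using kB kpos by (intro add_left_mono) auto
  finally show ?thesis .
qed



lemma neg_fin_of_not_minf:
  assumes "well_def_int M c" "ext_integral M c \<noteq> -\<infinity>"
  shows "(\<integral>\<^sup>+x. ennreal (- c x)\<partial>M) \<noteq> \<infinity>"
proof
  assume h: "(\<integral>\<^sup>+x. ennreal (- c x)\<partial>M) = \<infinity>"
  then have "(\<integral>\<^sup>+x. ennreal (c x)\<partial>M) \<noteq> \<infinity>" using assms(1) unfolding well_def_int_def by auto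
  then have "ext_integral M c = -\<infinity>" using h unfolding ext_integral_def
    by (cases "enn2ereal (\<integral>\<^sup>+x. ennreal (c x)\<partial>M)") (auto simp: enn2ereal_eq_top_iff)
  with assms(2) show False by simp
qed

lemma aH_ge0:
  assumes "prob_space \<rho>" "prob_space \<pi>"
  shows "0 \<le> aH \<rho> MY \<pi>"
proof -
  have "(\<lambda>x. 0) \<in> AH \<rho> MY \<pi>" using assms
    by (simp add: AH_def well_def_int_def prob_space.emeasure_space_1)
  then have "ext_integral \<pi> (\<lambda>x. 0) \<le> aH \<rho> MY \<pi>" unfolding aH_def by (rule SUP_upper)
  then show ?thesis by (simp add: ext_integral_def)
qed

lemma H_norm:
  assumes pi: "prob_space \<pi>" and rho: "prob_space \<rho>" and sr: "sets \<rho> = sets MX"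
    and sp: "sets \<pi> = sets (MX \<Otimes>\<^sub>M MY)" and wd: "well_def_int \<pi> c" and B: "0 < B"
    and K: "\<And>y. y \<in> space MY \<Longrightarrow> 0 < (\<integral>\<^sup>+ x. ennreal (exp (c (x, y))) \<partial>\<rho>) \<and>
                    (\<integral>\<^sup>+ x. ennreal (exp (c (x, y))) \<partial>\<rho>) \<le> ennreal B"
  shows "ext_integral \<pi> c \<le> aH \<rho> MY \<pi> + ereal (ln B)"
proof (cases "ext_integral \<pi> c = -\<infinity>")
  case True then show ?thesis by simp
next
  case False
  interpret rho: prob_space \<rho> by fact
  have cm: "c \<in> borel_measurable (MX \<Otimes>\<^sub>M MY)"
    using wd sp unfolding well_def_int_def by (simp add: measurable_cong_sets[OF sp refl])
  define K where "K y = (\<integral>\<^sup>+ x. ennreal (exp (c (x, y))) \<partial>\<rho>)" for y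
  define kk where "kk y = enn2real (K y)" for y
  have Km: "K \<in> borel_measurable MY"
  proof -
    have "(\<lambda>(y, x). ennreal (exp (c (x, y)))) \<in> borel_measurable (MY \<Otimes>\<^sub>M MX)"
      using cm by measurable
    then have "(\<lambda>(y, x). ennreal (exp (c (x, y)))) \<in> borel_measurable (MY \<Otimes>\<^sub>M \<rho>)"
      by (simp add: measurable_cong_sets[OF sets_pair_measure_cong[OF refl sr] refl])
    then show ?thesis unfolding K_def by (rule rho.borel_measurable_nn_integral)
  qed
  have kk_prop: "0 < kk y \<and> kk y \<le> B \<and> K y = ennreal (kk y)" if "y \<in> space MY" for y
  proof -
    have "K y \<noteq> \<infinity>" using K[OF that] unfolding K_def by (auto simp: top_unique)
    then have 1: "K y = ennreal (kk y)" unfolding kk_def by (simp add: less_top)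
    have "0 < kk y" using K[OF that] \<open>K y \<noteq> \<infinity>\<close> unfolding kk_def K_def
      by (simp add: enn2real_positive_iff less_top)
    moreover have "kk y \<le> B" using K[OF that] 1 B unfolding K_def by simp
    ultimately show ?thesis using 1 by simp
  qed
  define c' where "c' z = c z - ln (kk (snd z))" for z
  have c'm: "c' \<in> borel_measurable \<pi>"
  proof -
    have "c' \<in> borel_measurable (MX \<Otimes>\<^sub>M MY)" unfolding c'_def kk_def using cm Km by measurable
    then show ?thesis by (simp add: measurable_cong_sets[OF sp refl])
  qed
  have spc: "space \<pi> = space MX \<times> space MY"
    using sets_eq_imp_space_eq[OF sp] by (simp add: space_pair_measure)
  define c0 where "c0 z = c z + (- ln B)" for z
  have c0: "well_def_int \<pi> c0" "ext_integral \<pi> c0 = ext_integral \<pi> c + ereal (- ln B)"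
    using ext_add_const[OF pi wd, of "- ln B"] unfolding c0_def by auto
  have ge: "c0 z \<le> c' z" if "z \<in> space \<pi>" for z
  proof -
    have sz: "snd z \<in> space MY" using that unfolding spc by (simp add: mem_Times_iff)
    have "0 < kk (snd z)" "kk (snd z) \<le> B" using kk_prop[OF sz] by auto
    then have "ln (kk (snd z)) \<le> ln B" using B by (subst ln_le_cancel_iff) auto
    then show ?thesis unfolding c0_def c'_def by linarith
  qed
  have "ext_integral \<pi> c0 \<noteq> -\<infinity>" using c0(2) False by auto
  then have "(\<integral>\<^sup>+x. ennreal (- c0 x)\<partial>\<pi>) \<noteq> \<infinity>" by (rule neg_fin_of_not_minf[OF c0(1)])
  moreover have "(\<integral>\<^sup>+x. ennreal (- c' x)\<partial>\<pi>) \<le> (\<integral>\<^sup>+x. ennreal (- c0 x)\<partial>\<pi>)"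
    using ge by (intro nn_integral_mono ennreal_leI) auto
  ultimately have wd': "well_def_int \<pi> c'" using c'm unfolding well_def_int_def
    by (auto simp: top_unique)
  have "(\<integral>\<^sup>+ x. ennreal (exp (c' (x, y))) \<partial>\<rho>) = 1" if y: "y \<in> space MY" for y
  proof -
    note kp = kk_prop[OF y]
    have "(\<integral>\<^sup>+ x. ennreal (exp (c' (x, y))) \<partial>\<rho>) = (\<integral>\<^sup>+ x. ennreal (exp (c (x, y))) * ennreal (1/kk y) \<partial>\<rho>)"
      unfolding c'_def using kp
      by (intro nn_integral_cong) (simp add: exp_diff ennreal_mult[symmetric] field_simps)
    also have "\<dots> = K y * ennreal (1/kk y)"
      unfolding K_def
    proof (intro nn_integral_multc)
      have "(\<lambda>x. c (x, y)) \<in> borel_measurable MX" using cm y by measurable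
      then show "(\<lambda>x. ennreal (exp (c (x, y)))) \<in> borel_measurable \<rho>"
        by (simp add: measurable_cong_sets[OF sr refl])
    qed
    also have "\<dots> = 1" using kp by (simp add: ennreal_mult[symmetric])
    finally show ?thesis .
  qed
  with wd' have "c' \<in> AH \<rho> MY \<pi>" unfolding AH_def by auto
  then have "ext_integral \<pi> c' \<le> aH \<rho> MY \<pi>" unfolding aH_def by (rule SUP_upper)
  moreover have "ext_integral \<pi> c0 \<le> ext_integral \<pi> c'" using ge by (intro ext_mono_AE AE_I2)
  ultimately have "ext_integral \<pi> c + ereal (- ln B) \<le> aH \<rho> MY \<pi>" using c0(2) by simp
  then show ?thesis
    by (cases "ext_integral \<pi> c"; cases "aH \<rho> MY \<pi>") auto
qed



lemma exp_int_pos: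
  assumes "prob_space M" "g \<in> borel_measurable M"
  shows "0 < (\<integral>\<^sup>+ x. ennreal (exp (g x)) \<partial>M)"
proof (rule ccontr)
  interpret prob_space M by fact
  assume "\<not> ?thesis"
  then have "(\<integral>\<^sup>+ x. ennreal (exp (g x)) \<partial>M) = 0" by (simp add: not_less)
  then have "AE x in M. ennreal (exp (g x)) = 0" using assms(2)
    by (subst (asm) nn_integral_0_iff_AE) auto
  then have "AE x in M. False" by (rule AE_mp) (auto intro!: AE_I2)
  then show False by (simp add: AE_False)
qed

locale setting =
  fixes MX :: "'a measure" and MY :: "'b measure"
    and P \<nu> :: "'a measure" and \<pi> :: "('a \<times> 'b) measure" and f :: "'a \<Rightarrow> real"
  assumes probP: "prob_space P" and sP: "sets P = sets MX"
    and probpi: "prob_space \<pi>" and spi: "sets \<pi> = sets (MX \<Otimes>\<^sub>M MY)"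
    and marg: "distr \<pi> MX fst = P"
    and probnu: "prob_space \<nu>" and snu: "sets \<nu> = sets MX"
    and fm[measurable]: "f \<in> borel_measurable MX" and fnn: "\<And>x. 0 \<le> f x"
    and key: "\<And>g. g \<in> borel_measurable MX \<Longrightarrow> integral\<^sup>N P g = (\<integral>\<^sup>+ x. ennreal (f x) * g x \<partial>\<nu>)"
    and fpos: "AE x in P. 0 < f x"
    and bfin: "bS \<nu> P \<noteq> \<infinity>"
begin

interpretation P: prob_space P by (rule probP)
interpretation pi: prob_space \<pi> by (rule probpi)
interpretation nu: prob_space \<nu> by (rule probnu)

definition "lf x = (if 0 < f x then ln (f x) else 0)"

lemma lfm[measurable]: "lf \<in> borel_measurable MX"
  unfolding lf_def by measurable

lemma measP: "borel_measurable P = borel_measurable MX"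
  by (rule measurable_cong_sets[OF sP refl])
lemma measnu: "borel_measurable \<nu> = borel_measurable MX"
  by (rule measurable_cong_sets[OF snu refl])
lemma measpi: "borel_measurable \<pi> = borel_measurable (MX \<Otimes>\<^sub>M MY)"
  by (rule measurable_cong_sets[OF spi refl])

lemma fstm[measurable]: "fst \<in> measurable \<pi> MX"
  by (simp add: measurable_cong_sets[OF spi refl])

lemma AE_fst: assumes "AE x in P. Q x" shows "AE z in \<pi>. Q (fst z)"
proof -
  have "AE x in distr \<pi> MX fst. Q x" by (subst marg) (rule assms)
  then show ?thesis by (rule AE_distrD[OF fstm])
qed

lemma nn_fst: "g \<in> borel_measurable MX \<Longrightarrow> integral\<^sup>N P g = (\<integral>\<^sup>+ z. g (fst z) \<partial>\<pi>)"
  using nn_integral_distr[OF fstm, of g] by (simp add: marg measP)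

lemma ext_fst: "h \<in> borel_measurable MX \<Longrightarrow> ext_integral \<pi> (\<lambda>z. h (fst z)) = ext_integral P h"
  unfolding ext_integral_def by (subst (1 2) nn_fst) auto

lemma integrable_fst:
  fixes h :: "'a \<Rightarrow> real"
  assumes "integrable P h"
  shows "integrable \<pi> (\<lambda>z. h (fst z))" "integral\<^sup>L \<pi> (\<lambda>z. h (fst z)) = integral\<^sup>L P h"
proof -
  have hm: "h \<in> borel_measurable MX" using assms measP by auto
  show "integrable \<pi> (\<lambda>z. h (fst z))"
    using assms integrable_distr_eq[of fst \<pi> MX h, OF fstm hm] by (simp add: marg)
  show "integral\<^sup>L \<pi> (\<lambda>z. h (fst z)) = integral\<^sup>L P h"
    using integral_distr[of fst \<pi> MX h, OF fstm hm] by (simp add: marg)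
qed

lemma int_f: "(\<integral>\<^sup>+ x. ennreal (f x) \<partial>\<nu>) = 1"
  using key[of "\<lambda>x. 1"] P.emeasure_space_1 by simp

lemma lf_neg_fin: "(\<integral>\<^sup>+x. ennreal (- lf x)\<partial>P) \<noteq> \<infinity>"
proof -
  have "(\<integral>\<^sup>+x. ennreal (- lf x)\<partial>P) = (\<integral>\<^sup>+ x. ennreal (f x) * ennreal (- lf x) \<partial>\<nu>)"
    by (rule key) measurable
  also have "\<dots> \<le> (\<integral>\<^sup>+ x. 1 \<partial>\<nu>)"
  proof (intro nn_integral_mono)
    fix x
    have "f x * max 0 (- lf x) \<le> 1"
    proof (cases "0 < f x \<and> f x < 1")
      case True
      then have "ln (1 / f x) \<le> 1 / f x - 1" by (intro ln_le_minus_one) auto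
      then have "- ln (f x) \<le> 1 / f x - 1" using True by (simp add: ln_div)
      then have "f x * (- ln (f x)) \<le> f x * (1 / f x - 1)" using True by (intro mult_left_mono) auto
      also have "\<dots> = 1 - f x" using True by (simp add: field_simps)
      finally have 1: "f x * (- ln (f x)) \<le> 1 - f x" .
      have "ln (f x) < 0" using True by simp
      then have "max 0 (- lf x) = - ln (f x)" using True by (simp add: lf_def)
      then show ?thesis using 1 True by simp
    next
      case False
      then have "max 0 (- lf x) = 0" using fnn[of x] by (auto simp: lf_def max_def)
      then show ?thesis by simp
    qed
    moreover have "ennreal (f x) * ennreal (- lf x) = ennreal (f x * max 0 (- lf x))"
    proof (cases "0 \<le> - lf x")
      case True then show ?thesis using fnn[of x] ennreal_mult[of "f x" "- lf x"] by (simp add: max_def)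
    next
      case False then show ?thesis by (simp add: ennreal_neg max_def)
    qed
    ultimately show "ennreal (f x) * ennreal (- lf x) \<le> 1"
      by (simp add: ennreal_le_1)
  qed
  also have "\<dots> = 1" by (simp add: nu.emeasure_space_1)
  finally show ?thesis by (auto simp: top_unique)
qed

lemma lf_wd: "well_def_int P lf"
  using lf_neg_fin unfolding well_def_int_def by (simp add: measP)

lemma lf_int: "integrable P lf"
proof -
  have K1: "(\<integral>\<^sup>+ x. ennreal (exp (lf x)) \<partial>\<nu>) \<le> ennreal 2"
  proof -
    have "(\<integral>\<^sup>+ x. ennreal (exp (lf x)) \<partial>\<nu>) \<le> (\<integral>\<^sup>+ x. ennreal (f x) + 1 \<partial>\<nu>)"
      by (intro nn_integral_mono) (auto simp: lf_def fnn ennreal_plus[symmetric] simp del: ennreal_plus intro!: ennreal_leI)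
    also have "\<dots> = 2" by (subst nn_integral_add) (auto simp: int_f nu.emeasure_space_1 measnu)
    finally show ?thesis by simp
  qed
  have "ext_integral P lf \<le> bS \<nu> P + ereal (ln 2)"
    by (rule S_norm[OF probP lf_wd]) (use K1 exp_int_pos[OF probnu, of lf] in \<open>auto simp: snu sP measnu\<close>)
  then have "ext_integral P lf \<noteq> \<infinity>" using bfin by auto
  then have "(\<integral>\<^sup>+x. ennreal (lf x)\<partial>P) \<noteq> \<infinity>" using lf_neg_fin unfolding ext_integral_def
    by (auto simp: enn2ereal_eq_top_iff)
  then show ?thesis using lf_neg_fin unfolding real_integrable_def by (simp add: measP)
qed


definition "L = integral\<^sup>L P lf"

lemma sec_meas:
  assumes "c \<in> borel_measurable \<pi>" "y \<in> space MY"
  shows "(\<lambda>x. c (x, y)) \<in> borel_measurable MX"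
proof -
  have "c \<in> borel_measurable (MX \<Otimes>\<^sub>M MY)" using assms(1) by (simp add: measpi)
  then show ?thesis using assms(2) by measurable
qed

lemma bS_le: "bS \<nu> P \<le> ereal L"
  unfolding bS_def
proof (rule SUP_least)
  fix d assume "d \<in> AS \<nu> P"
  then have dwd: "well_def_int P d" and dK: "(\<integral>\<^sup>+ x. ennreal (exp (d x)) \<partial>\<nu>) = 1"
    unfolding AS_def by auto
  have dm[measurable]: "d \<in> borel_measurable MX" using dwd unfolding well_def_int_def by (simp add: measP)
  define q where "q x = (if 0 < f x then exp (d x) / f x else 0)" for x
  have qm[measurable]: "q \<in> borel_measurable MX" unfolding q_def by measurable
  have qnn: "0 \<le> q x" for x unfolding q_def by auto
  have "(\<integral>\<^sup>+ x. ennreal (q x) \<partial>P) = (\<integral>\<^sup>+ x. ennreal (f x) * ennreal (q x) \<partial>\<nu>)"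
    by (rule key) measurable
  also have "\<dots> \<le> (\<integral>\<^sup>+ x. ennreal (exp (d x)) \<partial>\<nu>)"
  proof (intro nn_integral_mono)
    fix x show "ennreal (f x) * ennreal (q x) \<le> ennreal (exp (d x))"
      using fnn[of x] qnn[of x] by (auto simp: q_def ennreal_mult[symmetric])
  qed
  finally have qle: "(\<integral>\<^sup>+ x. ennreal (q x) \<partial>P) \<le> 1" using dK by simp
  have qint: "integrable P q"
    using qle qnn by (auto simp: integrable_iff_bounded measP top_unique intro!: le_less_trans[OF qle])
  have "ennreal (integral\<^sup>L P q) \<le> 1"
    using qle by (subst (asm) nn_integral_eq_integral[OF qint]) (auto simp: qnn)
  then have qi: "integral\<^sup>L P q \<le> 1" by (simp add: ennreal_le_1)
  define h where "h x = lf x + q x - 1" for x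
  have hint: "integrable P h" unfolding h_def using lf_int qint by auto
  have "integral\<^sup>L P h = L + integral\<^sup>L P q - 1"
    unfolding h_def L_def using lf_int qint by (simp add: integral_diff integral_add P.prob_space)
  then have hL: "integral\<^sup>L P h \<le> L" using qi by simp
  have "AE x in P. d x \<le> h x"
    using fpos
  proof (rule AE_mp, intro AE_I2 impI)
    fix x assume fx: "0 < f x"
    have "1 + (d x - ln (f x)) \<le> exp (d x - ln (f x))" by (rule exp_ge_add_one_self)
    also have "\<dots> = exp (d x) / f x" using fx by (simp add: exp_diff)
    finally show "d x \<le> h x" using fx unfolding h_def lf_def q_def by simp
  qed
  then have "ext_integral P d \<le> ext_integral P h" by (rule ext_mono_AE)
  also have "\<dots> = ereal (integral\<^sup>L P h)" by (rule ext_integrable[OF hint])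
  also have "\<dots> \<le> ereal L" using hL by simp
  finally show "ext_integral P d \<le> ereal L" .
qed

lemma bS_ge: "ereal L \<le> bS \<nu> P"
proof (rule ereal_le_epsilon2)
  fix e :: real assume e: "0 < e"
  define d where "d x = (if 0 < f x then lf x else ln e)" for x
  have dm[measurable]: "d \<in> borel_measurable MX" unfolding d_def by measurable
  have ae: "AE x in P. lf x = d x" using fpos by (rule AE_mp) (auto simp: d_def intro!: AE_I2)
  have dwd: "well_def_int P d" by (rule wd_cong_AE[OF ae _ lf_wd]) (simp add: measP)
  have extd: "ext_integral P d = ereal L"
    using ext_cong_AE[OF ae] ext_integrable[OF lf_int] by (simp add: L_def)
  have "(\<integral>\<^sup>+ x. ennreal (exp (d x)) \<partial>\<nu>) \<le> (\<integral>\<^sup>+ x. ennreal (f x) + ennreal e \<partial>\<nu>)"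
    using e by (intro nn_integral_mono) (auto simp: d_def lf_def fnn ennreal_plus[symmetric] simp del: ennreal_plus intro!: ennreal_leI)
  also have "\<dots> = 1 + ennreal e"
    using e by (subst nn_integral_add) (auto simp: int_f nu.emeasure_space_1 measnu)
  also have "\<dots> = ennreal (1 + e)" using e by simp
  finally have K: "(\<integral>\<^sup>+ x. ennreal (exp (d x)) \<partial>\<nu>) \<le> ennreal (1 + e)" .
  have "ext_integral P d \<le> bS \<nu> P + ereal (ln (1 + e))"
    by (rule S_norm[OF probP dwd]) (use K exp_int_pos[OF probnu, of d] in \<open>auto simp: snu sP measnu\<close>)
  also have "\<dots> \<le> bS \<nu> P + ereal e"
    using e ln_add_one_self_le_self[of e] by (intro add_left_mono) auto
  finally show "ereal L \<le> bS \<nu> P + ereal e" using extd by simp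
qed


lemma lf_fst: "integrable \<pi> (\<lambda>z. lf (fst z))" "integral\<^sup>L \<pi> (\<lambda>z. lf (fst z)) = L"
  using integrable_fst[OF lf_int] by (auto simp: L_def)

lemma aH_le: "aH \<nu> MY \<pi> \<le> aH P MY \<pi> + ereal L"
  unfolding aH_def[of \<nu>]
proof (rule SUP_least)
  fix c assume "c \<in> AH \<nu> MY \<pi>"
  then have cwd: "well_def_int \<pi> c"
    and cK: "\<And>y. y \<in> space MY \<Longrightarrow> (\<integral>\<^sup>+ x. ennreal (exp (c (x, y))) \<partial>\<nu>) = 1"
    unfolding AH_def by auto
  have cm: "c \<in> borel_measurable \<pi>" using cwd unfolding well_def_int_def by simp
  have gi: "integrable \<pi> (\<lambda>z. - lf (fst z))" using lf_fst by auto
  have gI: "integral\<^sup>L \<pi> (\<lambda>z. - lf (fst z)) = - L" using lf_fst by simp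
  define c' where "c' z = c z + - lf (fst z)" for z
  have c': "well_def_int \<pi> c'" "ext_integral \<pi> c' = ext_integral \<pi> c + ereal (- L)"
    using ext_add_integrable[OF cwd gi] gI unfolding c'_def by auto
  have "ext_integral \<pi> c' \<le> aH P MY \<pi> + ereal (ln 1)"
  proof (rule H_norm[OF probpi probP sP spi c'(1)])
    fix y assume y: "y \<in> space MY"
    have cym[measurable]: "(\<lambda>x. c (x, y)) \<in> borel_measurable MX" by (rule sec_meas[OF cm y])
    have ceq: "(\<lambda>x. c' (x, y)) = (\<lambda>x. c (x, y) + - lf x)" by (auto simp: c'_def)
    have c'ym[measurable]: "(\<lambda>x. c' (x, y)) \<in> borel_measurable MX" unfolding ceq by measurable
    have "(\<integral>\<^sup>+ x. ennreal (exp (c' (x, y))) \<partial>P) = (\<integral>\<^sup>+ x. ennreal (f x) * ennreal (exp (c' (x, y))) \<partial>\<nu>)"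
      by (rule key) measurable
    also have "\<dots> \<le> (\<integral>\<^sup>+ x. ennreal (exp (c (x, y))) \<partial>\<nu>)"
    proof (intro nn_integral_mono)
      fix x show "ennreal (f x) * ennreal (exp (c' (x, y))) \<le> ennreal (exp (c (x, y)))"
        using fnn[of x] by (auto simp: c'_def lf_def ennreal_mult[symmetric] exp_diff)
    qed
    finally have "(\<integral>\<^sup>+ x. ennreal (exp (c' (x, y))) \<partial>P) \<le> ennreal 1" using cK[OF y] by simp
    moreover have "0 < (\<integral>\<^sup>+ x. ennreal (exp (c' (x, y))) \<partial>P)"
      by (rule exp_int_pos[OF probP]) (simp add: measP)
    ultimately show "0 < (\<integral>\<^sup>+ x. ennreal (exp (c' (x, y))) \<partial>P) \<and>
        (\<integral>\<^sup>+ x. ennreal (exp (c' (x, y))) \<partial>P) \<le> ennreal 1" by simp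
  qed simp
  then show "ext_integral \<pi> c \<le> aH P MY \<pi> + ereal L" using c'(2)
    by (cases "ext_integral \<pi> c"; cases "aH P MY \<pi>") auto
qed

lemma aH_ge: "aH P MY \<pi> + ereal L \<le> aH \<nu> MY \<pi>"
proof -
  have "aH P MY \<pi> \<le> aH \<nu> MY \<pi> - ereal L"
    unfolding aH_def[of P]
  proof (rule SUP_least)
    fix c assume "c \<in> AH P MY \<pi>"
    then have cwd: "well_def_int \<pi> c"
      and cK: "\<And>y. y \<in> space MY \<Longrightarrow> (\<integral>\<^sup>+ x. ennreal (exp (c (x, y))) \<partial>P) = 1"
      unfolding AH_def by auto
    have cm: "c \<in> borel_measurable \<pi>" using cwd unfolding well_def_int_def by simp
    have cmm[measurable]: "c \<in> borel_measurable (MX \<Otimes>\<^sub>M MY)" using cm by (simp add: measpi)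
    have c1: "well_def_int \<pi> (\<lambda>z. c z + lf (fst z))"
      "ext_integral \<pi> (\<lambda>z. c z + lf (fst z)) = ext_integral \<pi> c + ereal L"
      using ext_add_integrable[OF cwd lf_fst(1)] lf_fst(2) by auto
    have "ext_integral \<pi> c + ereal L \<le> aH \<nu> MY \<pi>"
    proof (rule ereal_le_epsilon2)
      fix e :: real assume e: "0 < e"
      define c' where "c' z = (if 0 < f (fst z) then c z + lf (fst z) else ln e)" for z
      have c'm: "c' \<in> borel_measurable \<pi>" unfolding c'_def measpi by measurable
      have ae: "AE z in \<pi>. c z + lf (fst z) = c' z"
        using AE_fst[OF fpos] by (rule AE_mp) (auto simp: c'_def intro!: AE_I2)
      have c'wd: "well_def_int \<pi> c'" by (rule wd_cong_AE[OF ae c'm c1(1)])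
      have ext': "ext_integral \<pi> c' = ext_integral \<pi> c + ereal L"
        using ext_cong_AE[OF ae] c1(2) by simp
      have "ext_integral \<pi> c' \<le> aH \<nu> MY \<pi> + ereal (ln (1 + e))"
      proof (rule H_norm[OF probpi probnu snu spi c'wd])
        fix y assume y: "y \<in> space MY"
        have cym[measurable]: "(\<lambda>x. c (x, y)) \<in> borel_measurable MX" by (rule sec_meas[OF cm y])
        have ceq: "(\<lambda>x. c' (x, y)) = (\<lambda>x. if 0 < f x then c (x, y) + lf x else ln e)" by (auto simp: c'_def)
        have c'ym[measurable]: "(\<lambda>x. c' (x, y)) \<in> borel_measurable MX" unfolding ceq by measurable
        have "(\<integral>\<^sup>+ x. ennreal (exp (c' (x, y))) \<partial>\<nu>) \<le>
              (\<integral>\<^sup>+ x. ennreal (f x) * ennreal (exp (c (x, y))) + ennreal e \<partial>\<nu>)"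
        proof (intro nn_integral_mono)
          fix x show "ennreal (exp (c' (x, y))) \<le> ennreal (f x) * ennreal (exp (c (x, y))) + ennreal e"
          proof (cases "0 < f x")
            case True
            then have "exp (c' (x, y)) = f x * exp (c (x, y))" by (simp add: c'_def lf_def exp_add)
            then show ?thesis using True by (simp add: ennreal_mult[symmetric] add_increasing2)
          next
            case False
            then show ?thesis using e by (simp add: c'_def add_increasing)
          qed
        qed
        also have "\<dots> = (\<integral>\<^sup>+ x. ennreal (f x) * ennreal (exp (c (x, y))) \<partial>\<nu>) + ennreal e"
          by (subst nn_integral_add) (auto simp: measnu nu.emeasure_space_1)
        also have "(\<integral>\<^sup>+ x. ennreal (f x) * ennreal (exp (c (x, y))) \<partial>\<nu>) = 1"
          using key[of "\<lambda>x. ennreal (exp (c (x, y)))"] cK[OF y] by simp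
        finally have "(\<integral>\<^sup>+ x. ennreal (exp (c' (x, y))) \<partial>\<nu>) \<le> ennreal (1 + e)" using e by simp
        moreover have "0 < (\<integral>\<^sup>+ x. ennreal (exp (c' (x, y))) \<partial>\<nu>)"
          by (rule exp_int_pos[OF probnu]) (simp add: measnu)
        ultimately show "0 < (\<integral>\<^sup>+ x. ennreal (exp (c' (x, y))) \<partial>\<nu>) \<and>
          (\<integral>\<^sup>+ x. ennreal (exp (c' (x, y))) \<partial>\<nu>) \<le> ennreal (1 + e)" by simp
      qed (use e in simp)
      also have "\<dots> \<le> aH \<nu> MY \<pi> + ereal e"
        using e ln_add_one_self_le_self[of e] by (intro add_left_mono) auto
      finally show "ext_integral \<pi> c + ereal L \<le> aH \<nu> MY \<pi> + ereal e" using ext' by simp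
    qed
    then show "ext_integral \<pi> c \<le> aH \<nu> MY \<pi> - ereal L"
      by (cases "ext_integral \<pi> c"; cases "aH \<nu> MY \<pi>") auto
  qed
  then show ?thesis by (cases "aH P MY \<pi>"; cases "aH \<nu> MY \<pi>") auto
qed

end


theorem mainTheorem5:
  fixes MX :: "'a measure" and MY :: "'b measure"
    and P \<nu> :: "'a measure" and \<pi> :: "('a \<times> 'b) measure"
  assumes "prob_space P" and "sets P = sets MX"
    and "prob_space \<pi>" and "sets \<pi> = sets (MX \<Otimes>\<^sub>M MY)"
    and "distr \<pi> MX fst = P"
    and "prob_space \<nu>" and "sets \<nu> = sets MX"
    and "\<bar>S_ent \<nu> P\<bar> \<noteq> \<infinity>" and "\<bar>H_ent \<nu> MY \<pi>\<bar> \<noteq> \<infinity>"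
  shows "info_gain \<pi> MY P = S_ent \<nu> P - H_ent \<nu> MY \<pi>"
proof -
  interpret P: prob_space P by fact
  interpret nu: prob_space \<nu> by fact
  have bfin: "bS \<nu> P \<noteq> \<infinity>" using assms(8) by (auto simp: S_ent_bS)
  have sPn: "sets P = sets \<nu>" using assms(2,7) by simp
  have ac: "absolutely_continuous \<nu> P"
    unfolding absolutely_continuous_def
  proof
    fix A assume A: "A \<in> null_sets \<nu>"
    then have As: "A \<in> sets P" using sPn by (auto simp: null_sets_def)
    show "A \<in> null_sets P"
    proof (rule ccontr)
      assume "A \<notin> null_sets P"
      then have p: "0 < measure P A" using As
        by (simp add: null_sets_def P.emeasure_eq_measure zero_less_measure_iff)
      have big: "ereal (real n * measure P A) \<le> bS \<nu> P" for n :: nat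
      proof -
        define d where "d x = real n * indicator A x" for x
        have dint: "integrable P d" unfolding d_def using As by (intro integrable_mult_right) (auto intro!: integrable_real_indicator simp: less_top[symmetric])
        have "integral\<^sup>L P d = real n * measure P A" unfolding d_def using As by simp
        then have e: "ext_integral P d = ereal (real n * measure P A)" using ext_integrable[OF dint] by simp
        have wd: "well_def_int P d" using dint unfolding real_integrable_def well_def_int_def by auto
        have "AE x in \<nu>. x \<notin> A" using A by (rule AE_not_in)
        then have "AE x in \<nu>. ennreal (exp (d x)) = 1"
          by (rule eventually_mono) (simp add: d_def)
        then have "(\<integral>\<^sup>+ x. ennreal (exp (d x)) \<partial>\<nu>) = (\<integral>\<^sup>+ x. 1 \<partial>\<nu>)"
          by (rule nn_integral_cong_AE)
        then have "(\<integral>\<^sup>+ x. ennreal (exp (d x)) \<partial>\<nu>) = 1" by (simp add: nu.emeasure_space_1)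
        with wd have "d \<in> AS \<nu> P" unfolding AS_def by auto
        then have "ext_integral P d \<le> bS \<nu> P" unfolding bS_def by (rule SUP_upper)
        with e show ?thesis by simp
      qed
      obtain r where r: "bS \<nu> P = ereal r"
        using bfin bS_ge0[OF assms(6,1)] by (cases "bS \<nu> P") auto
      define n where "n = nat \<lceil>r / measure P A\<rceil> + 1"
      have "r / measure P A < real n" unfolding n_def by linarith
      then have "r < real n * measure P A" using p by (simp add: field_simps)
      with big[of n] r show False by simp
    qed
  qed
  have finP: "finite_measure P" by (simp add: P.finite_measure_axioms)
  obtain D where Dm: "D \<in> borel_measurable \<nu>"
    and DRN: "AE x in \<nu>. RN_deriv \<nu> P x = ennreal (D x)"
    and Dpos: "AE x in P. 0 < D x" and Dnn: "\<And>x. 0 \<le> D x"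
    using nu.real_RN_deriv[OF finP ac sPn] by metis
  have key: "integral\<^sup>N P g = (\<integral>\<^sup>+ x. ennreal (D x) * g x \<partial>\<nu>)" if g: "g \<in> borel_measurable MX" for g
  proof -
    have "g \<in> borel_measurable \<nu>" using g by (simp add: measurable_cong_sets[OF assms(7) refl])
    then have "integral\<^sup>N P g = (\<integral>\<^sup>+x. RN_deriv \<nu> P x * g x \<partial>\<nu>)"
      by (rule nu.RN_deriv_nn_integral[OF ac sPn])
    also have "\<dots> = (\<integral>\<^sup>+ x. ennreal (D x) * g x \<partial>\<nu>)"
      using DRN by (intro nn_integral_cong_AE) (auto elim!: eventually_mono)
    finally show ?thesis .
  qed
  have DmX: "D \<in> borel_measurable MX" using Dm by (simp add: measurable_cong_sets[OF assms(7) refl])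
  interpret S: setting MX MY P \<nu> \<pi> D
    apply (rule setting.intro)
    apply (fact assms(1))
    apply (fact assms(2))
    apply (fact assms(3))
    apply (fact assms(4))
    apply (fact assms(5))
    apply (fact assms(6))
    apply (fact assms(7))
    apply (fact DmX)
    apply (fact Dnn)
    apply (erule key)
    apply (fact Dpos)
    apply (fact bfin)
    done
  have 1: "bS \<nu> P = ereal S.L" using S.bS_le S.bS_ge by (rule antisym)
  have 2: "aH \<nu> MY \<pi> = aH P MY \<pi> + ereal S.L" using S.aH_le S.aH_ge by (rule antisym)
  show ?thesis unfolding info_gain_def S_ent_bS H_ent_aH 1 2
    by (cases "aH P MY \<pi>") auto
qed


end
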